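(* Let $\ell\ge1$ and $d\ge 2$ be integers. Then $\omega(\mathcal{B}(1,d))=d-1$ and $\omega(\mathcal{B}(2,d))=d^2-d$, and for $\ell\ge 3$, $$d^{\ell}-d^{\ell-1}\le \omega(\mathcal{B}(\ell,d))\le d^{\ell}-d^{\lfloor \ell/2\rfloor}-\left(\lfloor \ell/2\rfloor-1\right).$$
   Context: The BCube $\mathcal{B}(\ell,d)$ ($\ell,d$ positive integers) is the symmetric digraph defined as follows, with $\mathbb{Z}_d=\{0,1,\dots,d-1\}$. - Hosts: all vectors $\mathbf{h}=h_1\cdots h_\ell\in\mathbb{Z}_d^{\ell}$. - Switches: for each layer $k\in\{1,\dots,\ell\}$, one switch $\mathbf{s}^k$ for each vector $s^k_1\cdots s^k_{\ell-1}\in\mathbb{Z}_d^{\ell-1}$. Switches of different layers are distinct vertices. - Links: host $\mathbf{h}$ and layer-$k$ switch $\mathbf{s}^k$ are joined if and only if $s^k_1\cdots s^k_{\ell-1}=h_1\cdots h_{k-1}h_{k+1}\cdots h_\ell$. Each such link gives two arcs, an uplink (host $\to$ switch) and a downlink (switch $\to$ host). There are no other arcs. A host-to-host routing $R$ assigns to every ordered pair of distinct hosts a directed path from the first to the second in $\mathcal{B}(\ell,d)$. $\omega(\mathcal{B}(\ell,d),R)$ is the minimum number of colors (wavelengths) needed to color the paths of $R$ so that any two paths sharing an arc get different colors. The optical index is $\omega(\mathcal{B}(\ell,d))=\min_R\omega(\mathcal{B}(\ell,d),R)$, the minimum taken over all host-to-host routings $R$. *)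

theory Defs
  imports Main
begin

text \<open>Vertices of the BCube: hosts are vectors (lists) over Z_d, switches carry
  their layer k and a vector of length l-1.\<close>
datatype bvertex = Host "nat list" | Switch nat "nat list"

definition bc_hosts :: "nat \<Rightarrow> nat \<Rightarrow> nat list set" where
  "bc_hosts l d = {h. length h = l \<and> set h \<subseteq> {..<d}}"

definition bc_links :: "nat \<Rightarrow> nat \<Rightarrow> (bvertex \<times> bvertex) set" where
  "bc_links l d = {(Host h, Switch k (take (k - 1) h @ drop k h)) | h k.
                     h \<in> bc_hosts l d \<and> 1 \<le> k \<and> k \<le> l}"

definition bc_arcs :: "nat \<Rightarrow> nat \<Rightarrow> (bvertex \<times> bvertex) set" where
  "bc_arcs l d = bc_links l d \<union> (bc_links l d)\<inverse>"

definition is_dipath :: "('a \<times> 'a) set \<Rightarrow> 'a list \<Rightarrow> 'a \<Rightarrow> 'a \<Rightarrow> bool" where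
  "is_dipath A p x y \<longleftrightarrow> p \<noteq> [] \<and> hd p = x \<and> last p = y \<and> distinct p \<and>
     (\<forall>i. Suc i < length p \<longrightarrow> (p ! i, p ! Suc i) \<in> A)"

definition path_arcs :: "'a list \<Rightarrow> ('a \<times> 'a) set" where
  "path_arcs p = set (zip p (tl p))"

definition host_pairs :: "nat \<Rightarrow> nat \<Rightarrow> (nat list \<times> nat list) set" where
  "host_pairs l d = {(x, y). x \<in> bc_hosts l d \<and> y \<in> bc_hosts l d \<and> x \<noteq> y}"

definition is_routing :: "nat \<Rightarrow> nat \<Rightarrow> (nat list \<Rightarrow> nat list \<Rightarrow> bvertex list) \<Rightarrow> bool" where
  "is_routing l d R \<longleftrightarrow>
     (\<forall>(x, y) \<in> host_pairs l d. is_dipath (bc_arcs l d) (R x y) (Host x) (Host y))"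

definition colourable :: "nat \<Rightarrow> nat \<Rightarrow> (nat list \<Rightarrow> nat list \<Rightarrow> bvertex list) \<Rightarrow> nat \<Rightarrow> bool" where
  "colourable l d R k \<longleftrightarrow> (\<exists>c :: nat list \<times> nat list \<Rightarrow> nat.
     (\<forall>q \<in> host_pairs l d. c q < k) \<and>
     (\<forall>q \<in> host_pairs l d. \<forall>q' \<in> host_pairs l d. q \<noteq> q' \<longrightarrow>
        path_arcs (case_prod R q) \<inter> path_arcs (case_prod R q') \<noteq> {} \<longrightarrow> c q \<noteq> c q'))"

definition omega_routing :: "nat \<Rightarrow> nat \<Rightarrow> (nat list \<Rightarrow> nat list \<Rightarrow> bvertex list) \<Rightarrow> nat" where
  "omega_routing l d R = (LEAST k. colourable l d R k)"

definition optical_index :: "nat \<Rightarrow> nat \<Rightarrow> nat" where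
  "optical_index l d = (LEAST w. \<exists>R. is_routing l d R \<and> omega_routing l d R = w)"

end

theory Submission
  imports Defs
begin

lemma hosts_iff: "h \<in> bc_hosts l d \<longleftrightarrow> length h = l \<and> (\<forall>p<l. h ! p < d)"
  unfolding bc_hosts_def by (auto simp: set_conv_nth)

lemma finite_hosts: "finite (bc_hosts l d)"
  unfolding bc_hosts_def using finite_lists_length_eq[of "{..<d}" l] by (simp add: conj_commute)

lemma card_hosts: "card (bc_hosts l d) = d ^ l"
  unfolding bc_hosts_def using card_lists_length_eq[of "{..<d}" l] by (simp add: conj_commute)

lemma finite_host_pairs: "finite (host_pairs l d)"
proof -
  have "host_pairs l d \<subseteq> bc_hosts l d \<times> bc_hosts l d" unfolding host_pairs_def by auto
  thus ?thesis using finite_hosts finite_subset by blast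
qed

lemma arc_cases:
  assumes "a \<in> bc_arcs l d"
  shows "(\<exists>h k. a = (Host h, Switch k (take (k - 1) h @ drop k h)) \<and> h \<in> bc_hosts l d \<and> 1 \<le> k \<and> k \<le> l)
       \<or> (\<exists>h k. a = (Switch k (take (k - 1) h @ drop k h), Host h) \<and> h \<in> bc_hosts l d \<and> 1 \<le> k \<and> k \<le> l)"
  using assms unfolding bc_arcs_def bc_links_def by auto

lemma up_arc: "h \<in> bc_hosts l d \<Longrightarrow> 1 \<le> k \<Longrightarrow> k \<le> l \<Longrightarrow> s = take (k - 1) h @ drop k h \<Longrightarrow>
   (Host h, Switch k s) \<in> bc_arcs l d"
  unfolding bc_arcs_def bc_links_def by auto

lemma down_arc: "h \<in> bc_hosts l d \<Longrightarrow> 1 \<le> k \<Longrightarrow> k \<le> l \<Longrightarrow> s = take (k - 1) h @ drop k h \<Longrightarrow>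
   (Switch k s, Host h) \<in> bc_arcs l d"
  unfolding bc_arcs_def bc_links_def by auto

lemma in_path_arcs: "Suc i < length p \<Longrightarrow> (p ! i, p ! Suc i) \<in> path_arcs p"
  unfolding path_arcs_def by (auto simp: in_set_conv_nth nth_tl intro!: exI[of _ i])

lemma colourable_exists:
  "colourable l d R (card (host_pairs l d))"
proof -
  obtain N where N: "bij_betw N (host_pairs l d) {0..<card (host_pairs l d)}"
    using ex_bij_betw_finite_nat[OF finite_host_pairs] by blast
  show ?thesis unfolding colourable_def
    apply (rule exI[of _ N])
    using N by (auto simp: bij_betw_def inj_on_def)
qed

section \<open>Lower bound\<close>

definition F1 :: "bvertex \<Rightarrow> nat" where
  "F1 v = (case v of Host h \<Rightarrow> h ! 0 | Switch k s \<Rightarrow> s ! 0)"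

lemma F1_arc:
  assumes "(u, w) \<in> bc_arcs l d" "\<forall>s. u \<noteq> Switch 1 s" "\<forall>s. w \<noteq> Switch 1 s"
  shows "F1 u = F1 w"
proof -
  have key: "(take (k - 1) h @ drop k h) ! 0 = h ! 0" if "h \<in> bc_hosts l d" "1 \<le> k" "k \<le> l" "k \<noteq> 1" for h k
  proof -
    have "length h = l" using that hosts_iff by auto
    hence "0 < length (take (k - 1) h)" using that by auto
    hence "(take (k - 1) h @ drop k h) ! 0 = take (k - 1) h ! 0" by (simp add: nth_append)
    also have "\<dots> = h ! 0" using that by simp
    finally show ?thesis .
  qed
  from arc_cases[OF assms(1)] show ?thesis
  proof
    assume "\<exists>h k. (u, w) = (Host h, Switch k (take (k - 1) h @ drop k h)) \<and> h \<in> bc_hosts l d \<and> 1 \<le> k \<and> k \<le> l"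
    then obtain h k where hk: "u = Host h" "w = Switch k (take (k - 1) h @ drop k h)" "h \<in> bc_hosts l d" "1 \<le> k" "k \<le> l"
      by auto
    have "k \<noteq> 1" using hk(2) assms(3) by auto
    thus ?thesis using hk key[OF hk(3-5)] by (simp add: F1_def)
  next
    assume "\<exists>h k. (u, w) = (Switch k (take (k - 1) h @ drop k h), Host h) \<and> h \<in> bc_hosts l d \<and> 1 \<le> k \<and> k \<le> l"
    then obtain h k where hk: "w = Host h" "u = Switch k (take (k - 1) h @ drop k h)" "h \<in> bc_hosts l d" "1 \<le> k" "k \<le> l"
      by auto
    have "k \<noteq> 1" using hk(2) assms(2) by auto
    thus ?thesis using hk key[OF hk(3-5)] by (simp add: F1_def)
  qed
qed

lemma dipath_layer1:
  assumes p: "is_dipath (bc_arcs l d) p (Host x) (Host y)" and ne: "x ! 0 \<noteq> y ! 0"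
  shows "\<exists>a \<in> path_arcs p. a \<in> (\<lambda>h. (Switch 1 (drop 1 h), Host h)) ` bc_hosts l d"
proof (rule ccontr)
  assume nex: "\<not> ?thesis"
  from p have pne: "p \<noteq> []" and hd: "hd p = Host x" and lst: "last p = Host y"
    and arcs: "\<And>i. Suc i < length p \<Longrightarrow> (p ! i, p ! Suc i) \<in> bc_arcs l d"
    unfolding is_dipath_def by auto
  have noS: "\<forall>s. p ! j \<noteq> Switch 1 s" if "j < length p" for j
  proof (rule ccontr)
    assume "\<not> (\<forall>s. p ! j \<noteq> Switch 1 s)"
    then obtain s where s: "p ! j = Switch 1 s" by auto
    have "j \<noteq> length p - 1"
    proof
      assume "j = length p - 1"
      hence "last p = p ! j" using pne by (simp add: last_conv_nth)
      thus False using s lst by simp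
    qed
    hence sj: "Suc j < length p" using that by auto
    have a: "(p ! j, p ! Suc j) \<in> bc_arcs l d" using arcs[OF sj] .
    have "\<exists>h. p ! Suc j = Host h \<and> h \<in> bc_hosts l d \<and> s = drop 1 h"
      using arc_cases[OF a] unfolding s by auto
    then obtain h where h: "p ! Suc j = Host h" "h \<in> bc_hosts l d" "s = drop 1 h" by blast
    have "(p ! j, p ! Suc j) \<in> path_arcs p" using in_path_arcs[OF sj] .
    moreover have "(p ! j, p ! Suc j) \<in> (\<lambda>h. (Switch 1 (drop 1 h), Host h)) ` bc_hosts l d"
      using h s by auto
    ultimately show False using nex by blast
  qed
  have "\<forall>i. i < length p \<longrightarrow> F1 (p ! i) = F1 (p ! 0)"
  proof (intro allI)
    fix i show "i < length p \<longrightarrow> F1 (p ! i) = F1 (p ! 0)"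
    proof (induction i)
      case 0 show ?case by (rule impI) (rule refl)
    next
      case (Suc i)
      show ?case
      proof
        assume si: "Suc i < length p"
        have "F1 (p ! i) = F1 (p ! Suc i)"
        proof -
          have n1: "\<forall>s. p ! i \<noteq> Switch 1 s" using noS si by simp
          have n2: "\<forall>s. p ! Suc i \<noteq> Switch 1 s" using noS si by simp
          show ?thesis using F1_arc[OF arcs[OF si] n1 n2] .
        qed
        moreover have "F1 (p ! i) = F1 (p ! 0)" using Suc.IH si by simp
        ultimately show "F1 (p ! Suc i) = F1 (p ! 0)" by simp
      qed
    qed
  qed
  moreover have "length p - 1 < length p" using pne by simp
  ultimately have "F1 (p ! (length p - 1)) = F1 (p ! 0)" by blast
  moreover have "p ! (length p - 1) = Host y" using lst pne by (simp add: last_conv_nth)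
  moreover have "p ! 0 = Host x" using hd pne by (simp add: hd_conv_nth)
  ultimately have "F1 (Host y) = F1 (Host x)" by simp
  thus False using ne by (simp add: F1_def)
qed

lemma card_first_ne:
  assumes "l \<ge> 1" "c < d"
  shows "card {y \<in> bc_hosts l d. y ! 0 \<noteq> c} = d ^ l - d ^ (l - 1)"
proof -
  have eq: "{y \<in> bc_hosts l d. y ! 0 = c} = (\<lambda>t. c # t) ` bc_hosts (l - 1) d"
  proof
    show "{y \<in> bc_hosts l d. y ! 0 = c} \<subseteq> (\<lambda>t. c # t) ` bc_hosts (l - 1) d"
    proof
      fix y assume y: "y \<in> {y \<in> bc_hosts l d. y ! 0 = c}"
      hence ly: "length y = l" by (simp add: hosts_iff)
      then obtain a t where yt: "y = a # t" using assms by (cases y) auto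
      have "t \<in> bc_hosts (l - 1) d" using y yt unfolding bc_hosts_def by auto
      thus "y \<in> (\<lambda>t. c # t) ` bc_hosts (l - 1) d" using y yt by auto
    qed
    show "(\<lambda>t. c # t) ` bc_hosts (l - 1) d \<subseteq> {y \<in> bc_hosts l d. y ! 0 = c}"
      using assms unfolding bc_hosts_def by auto
  qed
  have c1: "card {y \<in> bc_hosts l d. y ! 0 = c} = d ^ (l - 1)"
    unfolding eq by (subst card_image) (auto simp: card_hosts)
  have "{y \<in> bc_hosts l d. y ! 0 \<noteq> c} = bc_hosts l d - {y \<in> bc_hosts l d. y ! 0 = c}" by auto
  hence "card {y \<in> bc_hosts l d. y ! 0 \<noteq> c} = card (bc_hosts l d) - card {y \<in> bc_hosts l d. y ! 0 = c}"
    by (simp add: card_Diff_subset finite_hosts)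
  thus ?thesis using c1 card_hosts by simp
qed

lemma colour_lower:
  assumes l: "l \<ge> 1" and R: "is_routing l d R" and c: "colourable l d R k"
  shows "d ^ l - d ^ (l - 1) \<le> k"
proof -
  define P1 where "P1 = Sigma (bc_hosts l d) (\<lambda>x. {y \<in> bc_hosts l d. y ! 0 \<noteq> x ! 0})"
  define D1 where "D1 = (\<lambda>h. (Switch 1 (drop 1 h), Host h)) ` bc_hosts l d"
  obtain col where col1: "\<forall>q \<in> host_pairs l d. col q < k"
    and col2: "\<forall>q \<in> host_pairs l d. \<forall>q' \<in> host_pairs l d. q \<noteq> q' \<longrightarrow>
        path_arcs (case_prod R q) \<inter> path_arcs (case_prod R q') \<noteq> {} \<longrightarrow> col q \<noteq> col q'"
    using c unfolding colourable_def by blast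
  have P1hp: "P1 \<subseteq> host_pairs l d" unfolding P1_def host_pairs_def by auto
  have exa: "\<exists>a. a \<in> path_arcs (case_prod R q) \<and> a \<in> D1" if "q \<in> P1" for q
  proof -
    obtain x y where q: "q = (x, y)" by (cases q)
    have "(x, y) \<in> host_pairs l d" using that q P1hp by auto
    hence "is_dipath (bc_arcs l d) (R x y) (Host x) (Host y)" using R unfolding is_routing_def by auto
    moreover have "x ! 0 \<noteq> y ! 0" using that q unfolding P1_def by auto
    ultimately have "\<exists>a\<in>path_arcs (R x y). a \<in> D1" unfolding D1_def by (rule dipath_layer1)
    then obtain a where a1: "a \<in> path_arcs (R x y)" and a2: "a \<in> D1" by blast
    show ?thesis using a1 a2 q by (intro exI[of _ a]) simp
  qed
  define A where "A q = (SOME a. a \<in> path_arcs (case_prod R q) \<and> a \<in> D1)" for q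
  have A: "A q \<in> path_arcs (case_prod R q) \<and> A q \<in> D1" if "q \<in> P1" for q
    unfolding A_def by (rule someI_ex[OF exa[OF that]])
  have inj: "inj_on (\<lambda>q. (col q, A q)) P1"
  proof (rule inj_onI)
    fix q q' assume q: "q \<in> P1" and q': "q' \<in> P1" and eq: "(col q, A q) = (col q', A q')"
    show "q = q'"
    proof (rule ccontr)
      assume "q \<noteq> q'"
      moreover have "path_arcs (case_prod R q) \<inter> path_arcs (case_prod R q') \<noteq> {}"
        using A[OF q] A[OF q'] eq by auto
      ultimately show False using col2 q q' P1hp eq by blast
    qed
  qed
  have sub: "(\<lambda>q. (col q, A q)) ` P1 \<subseteq> {..<k} \<times> D1" using A col1 P1hp by auto
  have finD1: "finite D1" unfolding D1_def using finite_hosts by auto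
  have c1: "card P1 \<le> card ({..<k} \<times> D1)"
    using card_inj_on_le[OF inj sub] finD1 by simp
  have c2: "card ({..<k} \<times> D1) = k * card D1" by (simp add: card_cartesian_product)
  have c3: "card D1 \<le> d ^ l" unfolding D1_def using card_image_le[OF finite_hosts] card_hosts by metis
  have "k * card D1 \<le> k * d ^ l" using c3 by (rule mult_le_mono2)
  hence le: "card P1 \<le> k * d ^ l" using c1 c2 by linarith
  have "card P1 = (\<Sum>x \<in> bc_hosts l d. card {y \<in> bc_hosts l d. y ! 0 \<noteq> x ! 0})"
    unfolding P1_def by (rule card_SigmaI) (auto simp: finite_hosts)
  also have "\<dots> = (\<Sum>x \<in> bc_hosts l d. d ^ l - d ^ (l - 1))"
  proof (rule sum.cong[OF refl])
    fix x assume "x \<in> bc_hosts l d"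
    hence "x ! 0 < d" using l hosts_iff by auto
    thus "card {y \<in> bc_hosts l d. y ! 0 \<noteq> x ! 0} = d ^ l - d ^ (l - 1)" by (rule card_first_ne[OF l])
  qed
  also have "\<dots> = d ^ l * (d ^ l - d ^ (l - 1))" by (simp add: card_hosts)
  finally have eqP: "card P1 = d ^ l * (d ^ l - d ^ (l - 1))" .
  have fin: "d ^ l * (d ^ l - d ^ (l - 1)) \<le> d ^ l * k"
    using le unfolding eqP by (simp only: mult.commute)
  show ?thesis
  proof (cases "d = 0")
    case True then show ?thesis using l by (simp add: power_0_left)
  next
    case False
    hence "d ^ l > 0" by simp
    thus ?thesis using fin by simp
  qed
qed

section \<open>Dimension-order routing\<close>

definition hh :: "nat list \<Rightarrow> nat list \<Rightarrow> nat \<Rightarrow> nat list" where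
  "hh x y j = take j y @ drop j x"

definition ss :: "nat list \<Rightarrow> nat list \<Rightarrow> nat \<Rightarrow> nat list" where
  "ss x y j = take j y @ drop (Suc j) x"

fun dor :: "nat list \<Rightarrow> nat list \<Rightarrow> nat \<Rightarrow> nat \<Rightarrow> bvertex list" where
  "dor x y i 0 = [Host (hh x y i)]"
| "dor x y i (Suc n) = (if x ! i = y ! i then dor x y (Suc i) n
     else Host (hh x y i) # Switch (Suc i) (ss x y i) # dor x y (Suc i) n)"

lemma hh_nth:
  assumes "length x = L" "length y = L" "j \<le> L" "p < L"
  shows "hh x y j ! p = (if p < j then y ! p else x ! p)"
  using assms by (auto simp: hh_def nth_append min_def)

lemma ss_nth:
  assumes "length x = L" "length y = L" "j < L" "p < L - 1"
  shows "ss x y j ! p = (if p < j then y ! p else x ! Suc p)"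
  using assms by (auto simp: ss_def nth_append min_def)

lemma hh_length: "length x = L \<Longrightarrow> length y = L \<Longrightarrow> j \<le> L \<Longrightarrow> length (hh x y j) = L"
  by (simp add: hh_def min_def)

lemma hh_Suc:
  assumes "length x = L" "length y = L" "i < L" "x ! i = y ! i"
  shows "hh x y (Suc i) = hh x y i"
proof (rule nth_equalityI)
  show "length (hh x y (Suc i)) = length (hh x y i)" using assms by (simp add: hh_length)
  fix p assume "p < length (hh x y (Suc i))"
  hence p: "p < L" using assms by (simp add: hh_length)
  show "hh x y (Suc i) ! p = hh x y i ! p"
    using hh_nth[OF assms(1,2) _ p, of "Suc i"] hh_nth[OF assms(1,2) _ p, of i] assms
    by (cases "p = i") auto
qed

lemma hh_0: "hh x y 0 = x" by (simp add: hh_def)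
lemma hh_L: "length y = L \<Longrightarrow> length x = L \<Longrightarrow> hh x y L = y" by (simp add: hh_def)

lemma dor_ne: "dor x y i n \<noteq> []"
  by (induction n arbitrary: i) auto

lemma dor_hd:
  assumes "length x = L" "length y = L" "i + n \<le> L"
  shows "hd (dor x y i n) = Host (hh x y i)"
  using assms
proof (induction n arbitrary: i)
  case 0 then show ?case by simp
next
  case (Suc n)
  have IH: "hd (dor x y (Suc i) n) = Host (hh x y (Suc i))" using Suc by simp
  show ?case
  proof (cases "x ! i = y ! i")
    case True
    have "hh x y (Suc i) = hh x y i" using hh_Suc[OF Suc.prems(1,2) _ True] Suc.prems by simp
    thus ?thesis using True IH by simp
  next
    case False then show ?thesis by simp
  qed
qed

lemma dor_last:
  "last (dor x y i n) = Host (hh x y (i + n))"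
proof (induction n arbitrary: i)
  case 0 then show ?case by simp
next
  case (Suc n)
  have "last (dor x y (Suc i) n) = Host (hh x y (i + Suc n))" using Suc.IH[of "Suc i"] by simp
  thus ?case using dor_ne[of x y "Suc i" n] by simp
qed

lemma dor_set_host:
  "Host h \<in> set (dor x y i n) \<Longrightarrow> \<exists>j. i \<le> j \<and> j \<le> i + n \<and> h = hh x y j"
proof (induction n arbitrary: i)
  case 0 then show ?case by (intro exI[of _ i]) simp
next
  case (Suc n)
  show ?case
  proof (cases "Host h \<in> set (dor x y (Suc i) n)")
    case True
    then obtain j where "Suc i \<le> j" "j \<le> Suc i + n" "h = hh x y j" using Suc.IH by blast
    thus ?thesis by (intro exI[of _ j]) simp
  next
    case False
    hence "h = hh x y i" using Suc.prems by (auto split: if_splits)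
    thus ?thesis by (intro exI[of _ i]) simp
  qed
qed

lemma dor_set_switch:
  "Switch k s \<in> set (dor x y i n) \<Longrightarrow> Suc i \<le> k"
proof (induction n arbitrary: i)
  case 0 then show ?case by simp
next
  case (Suc n)
  show ?case
  proof (cases "Switch k s \<in> set (dor x y (Suc i) n)")
    case True
    thus ?thesis using Suc.IH by fastforce
  next
    case False
    thus ?thesis using Suc.prems by (auto split: if_splits)
  qed
qed

lemma dor_distinct:
  assumes "length x = L" "length y = L" "i + n \<le> L"
  shows "distinct (dor x y i n)"
  using assms
proof (induction n arbitrary: i)
  case 0 then show ?case by simp
next
  case (Suc n)
  have IH: "distinct (dor x y (Suc i) n)" using Suc by simp
  show ?case
  proof (cases "x ! i = y ! i")
    case True then show ?thesis using IH by simp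
  next
    case False
    have iL: "i < L" using Suc.prems by simp
    have h1: "Host (hh x y i) \<notin> set (dor x y (Suc i) n)"
    proof
      assume "Host (hh x y i) \<in> set (dor x y (Suc i) n)"
      then obtain j where j: "Suc i \<le> j" "j \<le> Suc i + n" "hh x y i = hh x y j"
        using dor_set_host by blast
      have "hh x y i ! i = x ! i" using hh_nth[OF Suc.prems(1,2) _ iL, of i] iL by simp
      moreover have "hh x y j ! i = y ! i" using hh_nth[OF Suc.prems(1,2) _ iL, of j] j Suc.prems by simp
      ultimately show False using j(3) False by simp
    qed
    have h2: "Switch (Suc i) (ss x y i) \<notin> set (dor x y (Suc i) n)"
      using dor_set_switch by fastforce
    show ?thesis using False IH h1 h2 by simp
  qed
qed

lemma path_arcs_Cons2: "path_arcs (a # b # r) = insert (a, b) (path_arcs (b # r))"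
  by (simp add: path_arcs_def)

lemma path_arcs_single: "path_arcs [a] = {}"
  by (simp add: path_arcs_def)

lemma path_arcs_Cons: "r \<noteq> [] \<Longrightarrow> path_arcs (a # r) = insert (a, hd r) (path_arcs r)"
  by (cases r) (auto simp: path_arcs_def)

definition arcJ :: "nat list \<Rightarrow> nat list \<Rightarrow> nat \<Rightarrow> (bvertex \<times> bvertex) set" where
  "arcJ x y j = {(Host (hh x y j), Switch (Suc j) (ss x y j)), (Switch (Suc j) (ss x y j), Host (hh x y (Suc j)))}"

lemma dor_arcs:
  assumes "length x = L" "length y = L" "i + n \<le> L"
  shows "a \<in> path_arcs (dor x y i n) \<Longrightarrow> \<exists>j. i \<le> j \<and> j < i + n \<and> x ! j \<noteq> y ! j \<and> a \<in> arcJ x y j"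
  using assms
proof (induction n arbitrary: i)
  case 0 then show ?case by (simp add: path_arcs_single)
next
  case (Suc n)
  have IH: "a \<in> path_arcs (dor x y (Suc i) n) \<Longrightarrow> \<exists>j. Suc i \<le> j \<and> j < Suc i + n \<and> x ! j \<noteq> y ! j \<and> a \<in> arcJ x y j"
    using Suc.IH[of "Suc i"] Suc.prems by simp
  show ?case
  proof (cases "x ! i = y ! i")
    case True
    then have "a \<in> path_arcs (dor x y (Suc i) n)" using Suc.prems by simp
    then obtain j where "Suc i \<le> j \<and> j < Suc i + n \<and> x ! j \<noteq> y ! j \<and> a \<in> arcJ x y j" using IH by blast
    thus ?thesis by (intro exI[of _ j]) simp
  next
    case False
    have hd: "hd (dor x y (Suc i) n) = Host (hh x y (Suc i))" using dor_hd[of x L y "Suc i" n] Suc.prems by simp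
    have "path_arcs (dor x y i (Suc n)) = insert (Host (hh x y i), Switch (Suc i) (ss x y i))
      (insert (Switch (Suc i) (ss x y i), Host (hh x y (Suc i))) (path_arcs (dor x y (Suc i) n)))"
      using False by (simp add: path_arcs_Cons2 path_arcs_Cons[OF dor_ne] hd)
    hence "a \<in> arcJ x y i \<or> a \<in> path_arcs (dor x y (Suc i) n)" using Suc.prems(1) by (auto simp: arcJ_def)
    thus ?thesis
    proof
      assume "a \<in> arcJ x y i" thus ?thesis using False by (intro exI[of _ i]) simp
    next
      assume "a \<in> path_arcs (dor x y (Suc i) n)"
      then obtain j where "Suc i \<le> j \<and> j < Suc i + n \<and> x ! j \<noteq> y ! j \<and> a \<in> arcJ x y j" using IH by blast
      thus ?thesis by (intro exI[of _ j]) simp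
    qed
  qed
qed

lemma hh_host:
  assumes "x \<in> bc_hosts l d" "y \<in> bc_hosts l d" "j \<le> l"
  shows "hh x y j \<in> bc_hosts l d"
proof -
  have "set (hh x y j) \<subseteq> set y \<union> set x" unfolding hh_def using set_take_subset set_drop_subset by fastforce
  thus ?thesis using assms unfolding bc_hosts_def by (auto simp: hh_def min_def)
qed

lemma arcJ_valid:
  assumes x: "x \<in> bc_hosts l d" and y: "y \<in> bc_hosts l d" and j: "j < l"
  shows "arcJ x y j \<subseteq> bc_arcs l d"
proof -
  have lx: "length x = l" and ly: "length y = l" using x y by (auto simp: bc_hosts_def)
  have e1: "ss x y j = take (Suc j - 1) (hh x y j) @ drop (Suc j) (hh x y j)"
    using lx ly j by (simp add: ss_def hh_def min_def)
  have e2: "ss x y j = take (Suc j - 1) (hh x y (Suc j)) @ drop (Suc j) (hh x y (Suc j))"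
    using lx ly j by (simp add: ss_def hh_def min_def take_Suc_conv_app_nth)
  have "(Host (hh x y j), Switch (Suc j) (ss x y j)) \<in> bc_arcs l d"
    by (rule up_arc[OF hh_host[OF x y] _ _ e1]) (use j in auto)
  moreover have "(Switch (Suc j) (ss x y j), Host (hh x y (Suc j))) \<in> bc_arcs l d"
    by (rule down_arc[OF hh_host[OF x y] _ _ e2]) (use j in auto)
  ultimately show ?thesis unfolding arcJ_def by auto
qed

definition RR :: "nat list \<Rightarrow> nat list \<Rightarrow> bvertex list" where
  "RR x y = dor x y 0 (length x)"

lemma RR_arcs:
  assumes "length x = l" "length y = l" "a \<in> path_arcs (RR x y)"
  shows "\<exists>j<l. x ! j \<noteq> y ! j \<and> a \<in> arcJ x y j"
proof -
  have "\<exists>j. 0 \<le> j \<and> j < 0 + l \<and> x ! j \<noteq> y ! j \<and> a \<in> arcJ x y j"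
    by (rule dor_arcs[OF assms(1,2)]) (use assms in \<open>auto simp: RR_def\<close>)
  thus ?thesis by auto
qed

lemma is_dipathI:
  assumes "p \<noteq> []" "hd p = x" "last p = y" "distinct p" "path_arcs p \<subseteq> A"
  shows "is_dipath A p x y"
  unfolding is_dipath_def using assms in_path_arcs by blast

lemma RR_routing: "is_routing l d RR"
  unfolding is_routing_def
proof (intro ballI, clarify)
  fix x y assume "(x, y) \<in> host_pairs l d"
  hence x: "x \<in> bc_hosts l d" and y: "y \<in> bc_hosts l d" unfolding host_pairs_def by auto
  have lx: "length x = l" and ly: "length y = l" using x y by (auto simp: bc_hosts_def)
  show "is_dipath (bc_arcs l d) (RR x y) (Host x) (Host y)"
  proof (rule is_dipathI)
    show "RR x y \<noteq> []" unfolding RR_def by (rule dor_ne)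
    show "hd (RR x y) = Host x" unfolding RR_def using dor_hd[OF lx ly, of 0 l] lx by (simp add: hh_0)
    show "last (RR x y) = Host y" unfolding RR_def using dor_last hh_L[OF ly lx] lx by simp
    show "distinct (RR x y)" unfolding RR_def using dor_distinct[OF lx ly, of 0 l] lx by simp
    show "path_arcs (RR x y) \<subseteq> bc_arcs l d"
    proof
      fix a assume "a \<in> path_arcs (RR x y)"
      then obtain j where "j < l" "a \<in> arcJ x y j"
        using RR_arcs[OF lx ly] by blast
      thus "a \<in> bc_arcs l d" using arcJ_valid[OF x y] by blast
    qed
  qed
qed

lemma umod: fixes a b d :: nat assumes "a < d" "b < d"
  shows "(b + d - a) mod d = (if a \<le> b then b - a else b + d - a)"
proof (cases "a \<le> b")
  case True
  hence "b + d - a = (b - a) + d" by arith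
  hence "(b + d - a) mod d = (b - a) mod d" by simp
  also have "\<dots> = b - a" using assms by simp
  finally show ?thesis using True by simp
next
  case False
  hence "b + d - a < d" using assms by arith
  thus ?thesis using False by simp
qed

lemma umod_zero: fixes a b d :: nat shows "a < d \<Longrightarrow> b < d \<Longrightarrow> (b + d - a) mod d = 0 \<longleftrightarrow> a = b"
  by (simp add: umod; arith)

lemma umod_canc1: fixes a b a' b' d :: nat shows "a < d \<Longrightarrow> b < d \<Longrightarrow> a' < d \<Longrightarrow> b' < d \<Longrightarrow>
  (b + d - a) mod d = (b' + d - a') mod d \<Longrightarrow> a = a' \<Longrightarrow> b = b'"
  by (simp add: umod split: if_splits; arith)

lemma umod_canc2: fixes a b a' b' d :: nat shows "a < d \<Longrightarrow> b < d \<Longrightarrow> a' < d \<Longrightarrow> b' < d \<Longrightarrow>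
  (b + d - a) mod d = (b' + d - a') mod d \<Longrightarrow> b = b' \<Longrightarrow> a = a'"
  by (simp add: umod split: if_splits; arith)

lemma umod_lt: fixes a b d :: nat shows "0 < d \<Longrightarrow> (b + d - a) mod d < d" by simp

definition dl :: "nat \<Rightarrow> nat list \<Rightarrow> nat list \<Rightarrow> nat list" where
  "dl d x y = map (\<lambda>p. (y ! p + d - x ! p) mod d) [0..<length x]"

lemma dl_nth: "p < length x \<Longrightarrow> dl d x y ! p = (y ! p + d - x ! p) mod d"
  by (simp add: dl_def)

lemma dl_length: "length (dl d x y) = length x"
  by (simp add: dl_def)

section \<open>Grouping of difference vectors\<close>

definition zv :: "nat \<Rightarrow> nat list" where "zv l = replicate l 0"
definition emb :: "nat \<Rightarrow> nat \<Rightarrow> nat list \<Rightarrow> nat list" where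
  "emb m l a = map (\<lambda>p. if m \<le> p \<and> p < 2 * m then a ! (p - m) else 0) [0..<l]"
definition Sf :: "nat \<Rightarrow> nat \<Rightarrow> nat list \<Rightarrow> bool" where
  "Sf m l v \<longleftrightarrow> (\<forall>p<l. (p < m \<or> 2 * m \<le> p) \<longrightarrow> v ! p = 0) \<and> (\<exists>p. m \<le> p \<and> p < 2 * m \<and> v ! p \<noteq> 0)"
definition vv :: "nat \<Rightarrow> nat \<Rightarrow> nat \<Rightarrow> nat list" where
  "vv m l i = map (\<lambda>p. if p = i \<or> p = m + i then 1 else 0) [0..<l]"
definition Vf :: "nat \<Rightarrow> nat \<Rightarrow> nat list \<Rightarrow> bool" where
  "Vf m l v \<longleftrightarrow> (\<exists>i. 1 \<le> i \<and> i < m \<and> v = vv m l i)"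
definition shl :: "nat \<Rightarrow> nat \<Rightarrow> nat list \<Rightarrow> nat list" where
  "shl m l v = map (\<lambda>p. if p < m then v ! (m + p) else 0) [0..<l]"
definition rr :: "nat \<Rightarrow> nat \<Rightarrow> nat list \<Rightarrow> nat list" where
  "rr m l v = (if Sf m l v then shl m l v else if Vf m l v then vv m l 0 else v)"
definition Tset :: "nat \<Rightarrow> nat \<Rightarrow> nat \<Rightarrow> nat list set" where
  "Tset l d m = (bc_hosts l d - {zv l}) - {v. Sf m l v} - {v. Vf m l v}"

lemma zv_nth: "p < l \<Longrightarrow> zv l ! p = 0" by (simp add: zv_def)
lemma zv_length: "length (zv l) = l" by (simp add: zv_def)
lemma vv_nth: "p < l \<Longrightarrow> vv m l i ! p = (if p = i \<or> p = m + i then 1 else 0)" by (simp add: vv_def)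
lemma vv_length: "length (vv m l i) = l" by (simp add: vv_def)
lemma shl_nth: "p < l \<Longrightarrow> shl m l v ! p = (if p < m then v ! (m + p) else 0)" by (simp add: shl_def)
lemma shl_length: "length (shl m l v) = l" by (simp add: shl_def)
lemma emb_nth: "p < l \<Longrightarrow> emb m l a ! p = (if m \<le> p \<and> p < 2 * m then a ! (p - m) else 0)" by (simp add: emb_def)
lemma emb_length: "length (emb m l a) = l" by (simp add: emb_def)

lemma nz_iff: "length v = l \<Longrightarrow> v \<noteq> zv l \<longleftrightarrow> (\<exists>p<l. v ! p \<noteq> 0)"
proof
  assume l: "length v = l" and "v \<noteq> zv l"
  show "\<exists>p<l. v ! p \<noteq> 0"
  proof (rule ccontr)
    assume "\<not> ?thesis"
    hence "v = zv l" using l by (intro nth_equalityI) (auto simp: zv_length zv_nth)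
    thus False using \<open>v \<noteq> zv l\<close> by simp
  qed
next
  assume "length v = l" "\<exists>p<l. v ! p \<noteq> 0"
  then obtain p where "p < l" "v ! p \<noteq> 0" by blast
  thus "v \<noteq> zv l" using zv_nth[of p l] by auto
qed

lemma Sf_supp: "Sf m l v \<Longrightarrow> p < l \<Longrightarrow> v ! p \<noteq> 0 \<Longrightarrow> m \<le> p \<and> p < 2 * m"
  unfolding Sf_def by force

lemma vv_supp: "p < l \<Longrightarrow> vv m l i ! p \<noteq> 0 \<Longrightarrow> p = i \<or> p = m + i"
  by (simp add: vv_nth split: if_splits)

lemma shl_supp: "p < l \<Longrightarrow> shl m l v ! p \<noteq> 0 \<Longrightarrow> p < m"
  by (simp add: shl_nth split: if_splits)

lemma rr_in_T:
  assumes ml: "2 * m \<le> l" and d: "1 < d" and v: "v \<in> bc_hosts l d" "v \<noteq> zv l"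
  shows "rr m l v \<in> Tset l d m"
proof -
  have lv: "length v = l" and vd: "\<forall>p<l. v ! p < d" using v hosts_iff by auto
  show ?thesis
  proof (cases "Sf m l v")
    case True
    let ?r = "shl m l v"
    have h: "?r \<in> bc_hosts l d" unfolding hosts_iff
    proof (intro conjI allI impI)
      show "length ?r = l" by (rule shl_length)
      fix p assume p: "p < l"
      show "?r ! p < d"
      proof (cases "p < m")
        case True
        hence "m + p < l" using ml by simp
        thus ?thesis using shl_nth[OF p] True vd by simp
      next
        case False thus ?thesis using shl_nth[OF p] d by simp
      qed
    qed
    obtain p where p: "m \<le> p" "p < 2 * m" "v ! p \<noteq> 0" using True unfolding Sf_def by blast
    have pl: "p - m < l" using p ml by simp
    have "?r ! (p - m) \<noteq> 0" using shl_nth[OF pl] p by simp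
    hence nz: "?r \<noteq> zv l" using nz_iff[OF shl_length] pl by blast
    have nS: "\<not> Sf m l ?r"
    proof
      assume "Sf m l ?r"
      then obtain q where q: "m \<le> q" "q < 2 * m" "?r ! q \<noteq> 0" unfolding Sf_def by blast
      have "q < l" using q ml by simp
      thus False using shl_nth[of q l m v] q by simp
    qed
    have nV: "\<not> Vf m l ?r"
    proof
      assume "Vf m l ?r"
      then obtain i where i: "1 \<le> i" "i < m" "?r = vv m l i" unfolding Vf_def by blast
      have il: "m + i < l" using i ml by simp
      have "?r ! (m + i) = 0" using shl_nth[OF il] by simp
      moreover have "vv m l i ! (m + i) = 1" using vv_nth[OF il] by simp
      ultimately show False using i(3) by simp
    qed
    show ?thesis using h nz nS nV True unfolding Tset_def rr_def by simp
  next
    case nS: False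
    show ?thesis
    proof (cases "Vf m l v")
      case True
      then obtain i where i: "1 \<le> i" "i < m" unfolding Vf_def by blast
      let ?r = "vv m l 0"
      have l0: "0 < l" using i ml by simp
      have h: "?r \<in> bc_hosts l d" unfolding hosts_iff using d by (simp add: vv_length vv_nth)
      have r0: "?r ! 0 = 1" using vv_nth[OF l0] by simp
      have nz: "?r \<noteq> zv l" using nz_iff[OF vv_length] l0 r0 by auto
      have nS2: "\<not> Sf m l ?r"
      proof
        assume "Sf m l ?r"
        hence "?r ! 0 = 0" using l0 i unfolding Sf_def by simp
        thus False using r0 by simp
      qed
      have nV: "\<not> Vf m l ?r"
      proof
        assume "Vf m l ?r"
        then obtain i' where i': "1 \<le> i'" "i' < m" "?r = vv m l i'" unfolding Vf_def by blast
        have "vv m l i' ! 0 = 0" using vv_nth[OF l0] i' by simp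
        thus False using r0 i'(3) by simp
      qed
      show ?thesis using h nz nS2 nV True nS unfolding Tset_def rr_def by simp
    next
      case False
      thus ?thesis using v nS unfolding Tset_def rr_def by simp
    qed
  qed
qed

lemma conf_S:
  assumes ml: "2 * m \<le> l" and lv: "length v = l" and lw: "length w = l"
    and S: "Sf m l v" and eq: "rr m l v = rr m l w"
    and j: "j < l" "v ! j \<noteq> 0" "w ! j \<noteq> 0"
  shows "v = w"
proof -
  have rv: "rr m l v = shl m l v" using S by (simp add: rr_def)
  have jm: "m \<le> j" "j < 2 * m" using Sf_supp[OF S j(1,2)] by auto
  show ?thesis
  proof (cases "Sf m l w")
    case True
    have rw: "rr m l w = shl m l w" using True by (simp add: rr_def)
    show ?thesis
    proof (rule nth_equalityI)
      show "length v = length w" using lv lw by simp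
      fix p assume "p < length v"
      hence p: "p < l" using lv by simp
      show "v ! p = w ! p"
      proof (cases "m \<le> p \<and> p < 2 * m")
        case True
        hence pl: "p - m < l" using ml by linarith
        have "shl m l v ! (p - m) = shl m l w ! (p - m)" using eq rv rw by simp
        moreover have "p - m < m" "m + (p - m) = p" using True by arith+
        ultimately show ?thesis using shl_nth[OF pl, of m v] shl_nth[OF pl, of m w] by simp
      next
        case False
        hence "v ! p = 0" and "w ! p = 0" using Sf_supp[OF S p] Sf_supp[OF \<open>Sf m l w\<close> p] by auto
        thus ?thesis by simp
      qed
    qed
  next
    case nSw: False
    show ?thesis
    proof (cases "Vf m l w")
      case True
      then obtain i where i: "1 \<le> i" "i < m" unfolding Vf_def by blast
      have rw: "rr m l w = vv m l 0" using True nSw by (simp add: rr_def)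
      have mlt: "m < l" using i ml by simp
      have "shl m l v ! m = 0" using shl_nth[OF mlt] by simp
      moreover have "vv m l 0 ! m = 1" using vv_nth[OF mlt] by simp
      ultimately show ?thesis using eq rv rw by simp
    next
      case False
      have rw: "rr m l w = w" using False nSw by (simp add: rr_def)
      have "shl m l v ! j \<noteq> 0" using eq rv rw j by simp
      hence "j < m" using shl_supp[OF j(1)] by blast
      thus ?thesis using jm by simp
    qed
  qed
qed

lemma conf_V:
  assumes ml: "2 * m \<le> l" and lv: "length v = l" and lw: "length w = l"
    and nS: "\<not> Sf m l v" "\<not> Sf m l w" and V: "Vf m l v" and eq: "rr m l v = rr m l w"
    and j: "j < l" "v ! j \<noteq> 0" "w ! j \<noteq> 0"
  shows "v = w"
proof -
  obtain i where i: "1 \<le> i" "i < m" "v = vv m l i" using V unfolding Vf_def by blast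
  have rv: "rr m l v = vv m l 0" using V nS by (simp add: rr_def)
  have ji: "j = i \<or> j = m + i" using vv_supp[OF j(1)] j(2) i(3) by blast
  show ?thesis
  proof (cases "Vf m l w")
    case True
    then obtain i' where i': "1 \<le> i'" "i' < m" "w = vv m l i'" unfolding Vf_def by blast
    have "j = i' \<or> j = m + i'" using vv_supp[OF j(1)] j(3) i'(3) by blast
    hence "i = i'" using ji i i' by auto
    thus ?thesis using i i' by simp
  next
    case False
    have rw: "rr m l w = w" using False nS by (simp add: rr_def)
    have "w = vv m l 0" using eq rv rw by simp
    hence "j = 0 \<or> j = m" using vv_supp[OF j(1)] j(3) by fastforce
    thus ?thesis using ji i by auto
  qed
qed

lemma rr_conf:
  assumes ml: "2 * m \<le> l" and lv: "length v = l" and lw: "length w = l"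
    and eq: "rr m l v = rr m l w"
    and j: "j < l" "v ! j \<noteq> 0" "w ! j \<noteq> 0"
  shows "v = w"
proof (cases "Sf m l v")
  case True thus ?thesis using conf_S[OF ml lv lw _ eq j] by blast
next
  case nSv: False
  show ?thesis
  proof (cases "Sf m l w")
    case True thus ?thesis using conf_S[OF ml lw lv True eq[symmetric] j(1,3,2)] by simp
  next
    case nSw: False
    show ?thesis
    proof (cases "Vf m l v")
      case True thus ?thesis using conf_V[OF ml lv lw nSv nSw True eq j] by blast
    next
      case nVv: False
      show ?thesis
      proof (cases "Vf m l w")
        case True thus ?thesis using conf_V[OF ml lw lv nSw nSv True eq[symmetric] j(1,3,2)] by simp
      next
        case False thus ?thesis using eq nSv nSw nVv by (simp add: rr_def)
      qed
    qed
  qed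
qed

lemma card_T:
  assumes ml: "2 * m \<le> l" and d: "1 < d"
  shows "finite (Tset l d m) \<and> card (Tset l d m) \<le> d ^ l - 1 - (d ^ m - 1) - (m - 1)"
proof -
  define H0 where "H0 = bc_hosts l d - {zv l}"
  define S where "S = {v \<in> H0. Sf m l v}"
  define V where "V = {v \<in> H0. Vf m l v}"
  have finH0: "finite H0" unfolding H0_def using finite_hosts by simp
  have zvh: "zv l \<in> bc_hosts l d" unfolding hosts_iff using d by (simp add: zv_length zv_nth)
  have cH0: "card H0 = d ^ l - 1" unfolding H0_def using zvh finite_hosts card_hosts
    by (simp add: card_Diff_subset)
  have T: "Tset l d m = H0 - (S \<union> V)" unfolding Tset_def H0_def S_def V_def by auto
  have SV: "S \<union> V \<subseteq> H0" unfolding S_def V_def by auto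
  have finSV: "finite (S \<union> V)" using finite_subset[OF SV finH0] .
  have disj: "S \<inter> V = {}"
  proof (rule ccontr)
    assume "S \<inter> V \<noteq> {}"
    then obtain v where v: "Sf m l v" "Vf m l v" unfolding S_def V_def by blast
    then obtain i where i: "1 \<le> i" "i < m" "v = vv m l i" unfolding Vf_def by blast
    have il: "i < l" using i ml by simp
    have "v ! i = 1" using i vv_nth[OF il] by simp
    moreover have "v ! i = 0" using v(1) il i unfolding Sf_def by simp
    ultimately show False by simp
  qed
  define A where "A = bc_hosts m d - {zv m}"
  have embS: "emb m l ` A \<subseteq> S"
  proof
    fix u assume "u \<in> emb m l ` A"
    then obtain a where a: "a \<in> A" "u = emb m l a" by blast
    have la: "length a = m" and ad: "\<forall>q<m. a ! q < d" using a(1) by (auto simp: A_def hosts_iff)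
    obtain q where q: "q < m" "a ! q \<noteq> 0" using a(1) nz_iff[OF la] unfolding A_def by auto
    have ql: "m + q < l" using q ml by simp
    have uq: "u ! (m + q) \<noteq> 0" using a(2) emb_nth[OF ql] q by simp
    have uh: "u \<in> bc_hosts l d" unfolding hosts_iff
    proof (intro conjI allI impI)
      show "length u = l" using a(2) by (simp add: emb_length)
      fix p assume p: "p < l"
      show "u ! p < d"
      proof (cases "m \<le> p \<and> p < 2 * m")
        case True
        hence "p - m < m" by arith
        thus ?thesis using a(2) emb_nth[OF p] True ad by simp
      next
        case False
        hence "u ! p = 0" using a(2) emb_nth[OF p, of m a] by auto
        thus ?thesis using d by simp
      qed
    qed
    have unz: "u \<noteq> zv l" using nz_iff[of u l] uh uq ql unfolding hosts_iff by blast
    have "Sf m l u" unfolding Sf_def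
    proof (intro conjI allI impI)
      fix p assume "p < l" "p < m \<or> 2 * m \<le> p"
      thus "u ! p = 0" using a(2) emb_nth by auto
    next
      show "\<exists>p. m \<le> p \<and> p < 2 * m \<and> u ! p \<noteq> 0" using uq q by (intro exI[of _ "m + q"]) simp
    qed
    thus "u \<in> S" unfolding S_def H0_def using uh unz by simp
  qed
  have embinj: "inj_on (emb m l) A"
  proof (rule inj_onI)
    fix a b assume a: "a \<in> A" and b: "b \<in> A" and eq: "emb m l a = emb m l b"
    have la: "length a = m" and lb: "length b = m" using a b by (auto simp: A_def hosts_iff)
    show "a = b"
    proof (rule nth_equalityI)
      show "length a = length b" using la lb by simp
      fix q assume "q < length a"
      hence q: "q < m" using la by simp
      hence ql: "m + q < l" using ml by simp
      have "emb m l a ! (m + q) = emb m l b ! (m + q)" using eq by simp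
      thus "a ! q = b ! q" using emb_nth[OF ql, of m a] emb_nth[OF ql, of m b] q by simp
    qed
  qed
  have cA: "card A = d ^ m - 1"
  proof -
    have "zv m \<in> bc_hosts m d" unfolding hosts_iff using d by (simp add: zv_length zv_nth)
    thus ?thesis unfolding A_def using finite_hosts card_hosts by (simp add: card_Diff_subset)
  qed
  have finS: "finite S" using finSV by auto
  have cS: "d ^ m - 1 \<le> card S"
    using card_mono[OF finS embS] card_image[OF embinj] cA by simp
  have vvV: "vv m l ` {1..<m} \<subseteq> V"
  proof
    fix u assume "u \<in> vv m l ` {1..<m}"
    then obtain i where i: "1 \<le> i" "i < m" "u = vv m l i" by auto
    have il: "i < l" using i ml by simp
    have uh: "u \<in> bc_hosts l d" unfolding hosts_iff using d i(3) by (simp add: vv_length vv_nth)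
    have "u ! i \<noteq> 0" using i vv_nth[OF il] by simp
    hence unz: "u \<noteq> zv l" using nz_iff[of u l] uh il unfolding hosts_iff by blast
    have "Vf m l u" unfolding Vf_def using i by blast
    thus "u \<in> V" unfolding V_def H0_def using uh unz by simp
  qed
  have vvinj: "inj_on (vv m l) {1..<m}"
  proof (rule inj_onI)
    fix i i' assume i: "i \<in> {1..<m}" and i': "i' \<in> {1..<m}" and eq: "vv m l i = vv m l i'"
    have il: "i < l" using i ml by simp
    have "vv m l i ! i = 1" using vv_nth[OF il] by simp
    hence "vv m l i' ! i \<noteq> 0" using eq by simp
    hence "i = i' \<or> i = m + i'" using vv_supp[OF il] by blast
    thus "i = i'" using i by auto
  qed
  have finV: "finite V" using finSV by auto
  have cV: "m - 1 \<le> card V"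
    using card_mono[OF finV vvV] card_image[OF vvinj] by simp
  have cSV: "card (S \<union> V) = card S + card V" using card_Un_disjoint[OF finS finV disj] .
  have "card (Tset l d m) = card H0 - card (S \<union> V)" unfolding T using SV finSV
    by (simp add: card_Diff_subset)
  also have "\<dots> \<le> d ^ l - 1 - (d ^ m - 1) - (m - 1)" using cH0 cSV cS cV by linarith
  finally show ?thesis using T finH0 by simp
qed

section \<open>Upper bound\<close>

lemma recover:
  assumes x: "x \<in> bc_hosts l d" and y: "y \<in> bc_hosts l d" and x': "x' \<in> bc_hosts l d" and y': "y' \<in> bc_hosts l d"
    and j: "j < l" and dq: "dl d x y = dl d x' y'" and sq: "ss x y j = ss x' y' j"
    and hq: "hh x y j = hh x' y' j \<or> hh x y (Suc j) = hh x' y' (Suc j)"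
  shows "x = x' \<and> y = y'"
proof -
  have lx: "length x = l" and ly: "length y = l" and lx': "length x' = l" and ly': "length y' = l"
    using x y x' y' by (auto simp: hosts_iff)
  have xd: "\<forall>p<l. x ! p < d" and yd: "\<forall>p<l. y ! p < d" and x'd: "\<forall>p<l. x' ! p < d" and y'd: "\<forall>p<l. y' ! p < d"
    using x y x' y' by (auto simp: hosts_iff)
  have one: "x ! p = x' ! p \<or> y ! p = y' ! p" if p: "p < l" for p
  proof -
    consider "p < j" | "p = j" | "j < p" by arith
    thus ?thesis
    proof cases
      case 1
      have pl: "p < l - 1" using 1 j by simp
      have "ss x y j ! p = ss x' y' j ! p" using sq by simp
      thus ?thesis using ss_nth[OF lx ly j pl] ss_nth[OF lx' ly' j pl] 1 by simp
    next
      case 2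
      from hq show ?thesis
      proof
        assume "hh x y j = hh x' y' j"
        hence "hh x y j ! p = hh x' y' j ! p" by simp
        thus ?thesis using hh_nth[OF lx ly _ p, of j] hh_nth[OF lx' ly' _ p, of j] 2 j by simp
      next
        assume "hh x y (Suc j) = hh x' y' (Suc j)"
        hence "hh x y (Suc j) ! p = hh x' y' (Suc j) ! p" by simp
        thus ?thesis using hh_nth[OF lx ly _ p, of "Suc j"] hh_nth[OF lx' ly' _ p, of "Suc j"] 2 j by simp
      qed
    next
      case 3
      have pl: "p - 1 < l - 1" using 3 p by arith
      have e: "Suc (p - 1) = p" "\<not> p - 1 < j" using 3 by arith+
      have "ss x y j ! (p - 1) = ss x' y' j ! (p - 1)" using sq by simp
      thus ?thesis using ss_nth[OF lx ly j pl] ss_nth[OF lx' ly' j pl] e by simp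
    qed
  qed
  have both: "x ! p = x' ! p \<and> y ! p = y' ! p" if p: "p < l" for p
  proof -
    have e: "(y ! p + d - x ! p) mod d = (y' ! p + d - x' ! p) mod d"
      using dl_nth[of p x d y] dl_nth[of p x' d y'] dq lx lx' p by simp
    from one[OF p] show ?thesis
    proof
      assume a: "x ! p = x' ! p"
      thus ?thesis using umod_canc1[OF _ _ _ _ e a] xd yd x'd y'd p by blast
    next
      assume b: "y ! p = y' ! p"
      thus ?thesis using umod_canc2[OF _ _ _ _ e b] xd yd x'd y'd p by blast
    qed
  qed
  show ?thesis
    using both lx ly lx' ly' by (auto intro!: nth_equalityI)
qed

lemma dl_in:
  assumes x: "x \<in> bc_hosts l d" and y: "y \<in> bc_hosts l d" and ne: "x \<noteq> y"
  shows "dl d x y \<in> bc_hosts l d - {zv l}"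
proof -
  have lx: "length x = l" and ly: "length y = l" using x y by (auto simp: hosts_iff)
  have xd: "\<forall>p<l. x ! p < d" and yd: "\<forall>p<l. y ! p < d" using x y by (auto simp: hosts_iff)
  obtain p where p: "p < l" "x ! p \<noteq> y ! p"
  proof (rule ccontr)
    assume "\<not> thesis"
    hence "\<forall>p<l. x ! p = y ! p" using that by blast
    hence "x = y" using lx ly by (auto intro!: nth_equalityI)
    thus False using ne by simp
  qed
  have d0: "0 < d" using xd p by (metis gr_zeroI less_zeroE)
  have h: "dl d x y \<in> bc_hosts l d" unfolding hosts_iff using lx d0 by (simp add: dl_length dl_nth)
  have "dl d x y ! p \<noteq> 0" using dl_nth[of p x d y] lx p umod_zero[of "x ! p" d "y ! p"] xd yd by simp
  hence "dl d x y \<noteq> zv l" using nz_iff[of "dl d x y" l] dl_length lx p by blast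
  thus ?thesis using h by simp
qed

lemma dl_nz: "x \<in> bc_hosts l d \<Longrightarrow> y \<in> bc_hosts l d \<Longrightarrow> j < l \<Longrightarrow> x ! j \<noteq> y ! j \<Longrightarrow> dl d x y ! j \<noteq> 0"
  using dl_nth[of j x d y] umod_zero[of "x ! j" d "y ! j"] by (auto simp: hosts_iff)

lemma upper_colourable:
  assumes ml: "2 * m \<le> l" and d: "1 < d"
  shows "colourable l d RR (d ^ l - 1 - (d ^ m - 1) - (m - 1))"
proof -
  let ?T = "Tset l d m"
  have finT: "finite ?T" and cT: "card ?T \<le> d ^ l - 1 - (d ^ m - 1) - (m - 1)" using card_T[OF ml d] by auto
  obtain N where N: "bij_betw N ?T {0..<card ?T}" using ex_bij_betw_finite_nat[OF finT] by blast
  define c where "c q = N (rr m l (dl d (fst q) (snd q)))" for q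
  have inT: "rr m l (dl d (fst q) (snd q)) \<in> ?T" if "q \<in> host_pairs l d" for q
    using rr_in_T[OF ml d] dl_in that unfolding host_pairs_def by auto
  show ?thesis unfolding colourable_def
  proof (intro exI[of _ c] conjI ballI impI)
    fix q assume "q \<in> host_pairs l d"
    hence "c q < card ?T" using inT N unfolding c_def bij_betw_def by auto
    thus "c q < d ^ l - 1 - (d ^ m - 1) - (m - 1)" using cT by simp
  next
    fix q q' assume q: "q \<in> host_pairs l d" and q': "q' \<in> host_pairs l d" and ne: "q \<noteq> q'"
      and sh: "path_arcs (case_prod RR q) \<inter> path_arcs (case_prod RR q') \<noteq> {}"
    obtain x y where qq: "q = (x, y)" by (cases q)
    obtain x' y' where qq': "q' = (x', y')" by (cases q')
    have x: "x \<in> bc_hosts l d" and y: "y \<in> bc_hosts l d" using q qq unfolding host_pairs_def by auto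
    have x': "x' \<in> bc_hosts l d" and y': "y' \<in> bc_hosts l d" using q' qq' unfolding host_pairs_def by auto
    have lx: "length x = l" and ly: "length y = l" and lx': "length x' = l" and ly': "length y' = l"
      using x y x' y' by (auto simp: hosts_iff)
    obtain a where a1: "a \<in> path_arcs (RR x y)" and a2: "a \<in> path_arcs (RR x' y')" using sh qq qq' by auto
    obtain j where j: "j < l" "x ! j \<noteq> y ! j" "a \<in> arcJ x y j" using RR_arcs[OF lx ly a1] by blast
    obtain j' where j': "j' < l" "x' ! j' \<noteq> y' ! j'" "a \<in> arcJ x' y' j'" using RR_arcs[OF lx' ly' a2] by blast
    have jj: "j' = j" and sq: "ss x y j = ss x' y' j"
      and hq: "hh x y j = hh x' y' j \<or> hh x y (Suc j) = hh x' y' (Suc j)"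
      using j(3) j'(3) unfolding arcJ_def by auto
    show "c q \<noteq> c q'"
    proof
      assume "c q = c q'"
      hence eqr: "rr m l (dl d x y) = rr m l (dl d x' y')"
        using N inT[OF q] inT[OF q'] qq qq' unfolding c_def bij_betw_def inj_on_def by auto
      have nz1: "dl d x y ! j \<noteq> 0" using dl_nz[OF x y j(1,2)] .
      have nz2: "dl d x' y' ! j \<noteq> 0" using dl_nz[OF x' y' j'(1,2)] jj by simp
      have l1: "length (dl d x y) = l" using dl_length lx by simp
      have l2: "length (dl d x' y') = l" using dl_length lx' by simp
      have "dl d x y = dl d x' y'" by (rule rr_conf[OF ml l1 l2 eqr j(1) nz1 nz2])
      hence "x = x' \<and> y = y'" using recover[OF x y x' y' j(1) _ sq hq] by blast
      thus False using ne qq qq' by simp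
    qed
  qed
qed

lemma opt_bounds:
  assumes l: "l \<ge> 1" and d: "d \<ge> 2"
  shows "d ^ l - d ^ (l - 1) \<le> optical_index l d \<and>
         optical_index l d \<le> d ^ l - 1 - (d ^ (l div 2) - 1) - (l div 2 - 1)"
proof -
  let ?m = "l div 2"
  let ?K = "d ^ l - 1 - (d ^ ?m - 1) - (?m - 1)"
  have col: "colourable l d RR ?K" by (rule upper_colourable) (use d in auto)
  have om: "omega_routing l d RR \<le> ?K" unfolding omega_routing_def by (rule Least_le[of "colourable l d RR", OF col])
  have ex: "\<exists>R. is_routing l d R \<and> omega_routing l d R = omega_routing l d RR"
    using RR_routing by blast
  have up: "optical_index l d \<le> omega_routing l d RR"
    unfolding optical_index_def by (rule Least_le[of "\<lambda>w. \<exists>R. is_routing l d R \<and> omega_routing l d R = w", OF ex])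
  have "\<exists>R. is_routing l d R \<and> omega_routing l d R = optical_index l d"
    unfolding optical_index_def by (rule LeastI[of "\<lambda>w. \<exists>R. is_routing l d R \<and> omega_routing l d R = w", OF ex])
  then obtain R where R: "is_routing l d R" "omega_routing l d R = optical_index l d" by blast
  have "colourable l d R (omega_routing l d R)"
    unfolding omega_routing_def by (rule LeastI[of "colourable l d R", OF colourable_exists])
  hence "d ^ l - d ^ (l - 1) \<le> omega_routing l d R" by (rule colour_lower[OF l R(1)])
  thus ?thesis using R(2) up om by simp
qed

theorem theorem2:
  fixes d :: nat
  assumes "d \<ge> 2"
  shows "optical_index 1 d = d - 1 \<and>
         optical_index 2 d = d ^ 2 - d \<and>
         (\<forall>l::nat. l \<ge> 3 \<longrightarrow>
           d ^ l - d ^ (l - 1) \<le> optical_index l d \<and>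
           optical_index l d \<le> d ^ l - d ^ (l div 2) - (l div 2 - 1))"
proof (intro conjI allI impI)
  have "d ^ 1 - d ^ (1 - 1) \<le> optical_index 1 d \<and>
         optical_index 1 d \<le> d ^ 1 - 1 - (d ^ (1 div 2) - 1) - (1 div 2 - 1)"
    by (rule opt_bounds) (use assms in auto)
  thus "optical_index 1 d = d - 1" by simp
next
  have b: "d ^ 2 - d ^ (2 - 1) \<le> optical_index 2 d \<and>
         optical_index 2 d \<le> d ^ 2 - 1 - (d ^ (2 div 2) - 1) - (2 div 2 - 1)"
    by (rule opt_bounds) (use assms in auto)
  have "d \<le> d ^ 2" by (simp add: power2_eq_square)
  hence "d ^ 2 - 1 - (d - 1) = d ^ 2 - d" using assms by arith
  thus "optical_index 2 d = d ^ 2 - d" using b by simp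
next
  fix l :: nat assume l: "l \<ge> 3"
  have b: "d ^ l - d ^ (l - 1) \<le> optical_index l d \<and>
         optical_index l d \<le> d ^ l - 1 - (d ^ (l div 2) - 1) - (l div 2 - 1)"
    by (rule opt_bounds) (use assms l in auto)
  thus "d ^ l - d ^ (l - 1) \<le> optical_index l d" by simp
  have p1: "1 \<le> d ^ (l div 2)" using assms by simp
  have "d ^ l - 1 - (d ^ (l div 2) - 1) = d ^ l - d ^ (l div 2)" using p1 by arith
  thus "optical_index l d \<le> d ^ l - d ^ (l div 2) - (l div 2 - 1)" using b by simp
qed

end
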